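(* Consider the classical secretary problem with $n$ candidates: $n$ candidates with distinct ranks arrive one at a time in uniformly random order (all $n!$ orders equally likely); after seeing the $k$-th candidate the decision maker knows only the relative ranks of the first $k$ candidates, must decide immediately and irrevocably whether to stop, and wins if the candidate at which he stops is the overall best. Let $V(n)$ be the maximal win probability over all (non-anticipating) stopping rules. For $k\in\{1,\dots,n\}$ let the threshold rule $\tau_k$ stop at the first candidate with index $j\ge k$ that is relatively best (better than all candidates $1,\dots,j-1$), and stop at candidate $n$ if there is none. Then: (i) $V(n)$ is strictly decreasing in $n$ for $n\ge 3$, i.e. $V(n+1)<V(n)$ for all $n\ge3$; (ii) for every $n\ge 3$ the optimal threshold is unique, i.e. there is exactly one $k\in\{1,\dots,n\}$ for which the win probability of $\tau_k$ is maximal among $\tau_1,\dots,\tau_n$.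
   Context: For $k\ge2$ the win probability of $\tau_k$ equals $\frac{k-1}{n}\sum_{j=k-1}^{n-1}\frac1j$, and that of $\tau_1$ is $1/n$; an optimal threshold rule achieves $V(n)$. *)

theory Defs
  imports "HOL-Combinatorics.Permutations" Complex_Main
begin

text \<open>Arrival orders: a bijection sigma on {..<n}; sigma i is the (absolute) rank of the
candidate arriving at (0-based) position i, larger rank = better, so the overall best
candidate has rank n - 1. All n! orders are equally likely.\<close>

definition orders :: "nat \<Rightarrow> (nat \<Rightarrow> nat) set" where
  "orders n = {\<sigma>. \<sigma> permutes {..<n}}"

definition info :: "(nat \<Rightarrow> nat) \<Rightarrow> nat \<Rightarrow> (nat \<Rightarrow> nat \<Rightarrow> bool)" where
  "info \<sigma> j = (\<lambda>a b. a \<le> j \<and> b \<le> j \<and> \<sigma> a < \<sigma> b)"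

text \<open>A (non-anticipating, deterministic) stopping rule decides at position j
using only the relative-order information up to j.\<close>

type_synonym rule = "nat \<Rightarrow> (nat \<Rightarrow> nat \<Rightarrow> bool) \<Rightarrow> bool"

text \<open>Stopping position (0-based); if the rule never says stop, the decision maker
stops at the last candidate (this convention does not affect the optimum).\<close>

definition stop_pos :: "nat \<Rightarrow> rule \<Rightarrow> (nat \<Rightarrow> nat) \<Rightarrow> nat" where
  "stop_pos n r \<sigma> =
     (if \<exists>j<n. r j (info \<sigma> j) then (LEAST j. j < n \<and> r j (info \<sigma> j)) else n - 1)"

definition win_prob :: "nat \<Rightarrow> rule \<Rightarrow> real" where
  "win_prob n r =
     real (card {\<sigma> \<in> orders n. \<sigma> (stop_pos n r \<sigma>) = n - 1}) / real (card (orders n))"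

definition V :: "nat \<Rightarrow> real" where
  "V n = (SUP r. win_prob n r)"

text \<open>Threshold rule tau_k (k 1-based): stop at the first candidate with (1-based)
index >= k that is relatively best.\<close>

definition thr :: "nat \<Rightarrow> rule" where
  "thr k = (\<lambda>j I. k \<le> Suc j \<and> (\<forall>i<j. I i j))"

end

theory Submission
  imports Defs
begin



definition ins :: "nat \<Rightarrow> nat \<Rightarrow> (nat \<Rightarrow> nat) \<Rightarrow> nat \<Rightarrow> nat" where
  "ins m v \<rho> = (\<lambda>i. if i < m then (if \<rho> i < v then \<rho> i else Suc (\<rho> i)) else if i = m then v else i)"

lemma ins_perm:
  assumes v: "v \<le> m" and p: "\<rho> permutes {..<m}"
  shows "ins m v \<rho> permutes {..<Suc m}"
proof (rule bij_imp_permutes)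
  have lt: "\<rho> i < m" if "i < m" for i using permutes_in_image[OF p, of i] that by simp
  have injr: "inj \<rho>" using p by (rule permutes_inj)
  have sub: "ins m v \<rho> ` {..<Suc m} \<subseteq> {..<Suc m}"
    using lt v by (auto simp: ins_def)
  have inj: "inj_on (ins m v \<rho>) {..<Suc m}"
  proof (rule inj_onI)
    fix x y assume x: "x \<in> {..<Suc m}" and y: "y \<in> {..<Suc m}" and e: "ins m v \<rho> x = ins m v \<rho> y"
    show "x = y"
    proof (cases "x < m")
      case True note xm = True
      show ?thesis
      proof (cases "y < m")
        case True
        with xm e have "\<rho> x = \<rho> y" by (auto simp: ins_def split: if_splits)
        then show ?thesis using injr by (auto dest: injD)
      next
        case False
        with y have "y = m" by auto
        with xm e show ?thesis by (auto simp: ins_def split: if_splits)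
      qed
    next
      case False
      with x have xm: "x = m" by auto
      show ?thesis
      proof (cases "y < m")
        case True
        with xm e show ?thesis by (auto simp: ins_def split: if_splits)
      next
        case False with y xm show ?thesis by auto
      qed
    qed
  qed
  show "bij_betw (ins m v \<rho>) {..<Suc m} {..<Suc m}"
    unfolding bij_betw_def using inj endo_inj_surj[OF _ sub inj] by auto
  show "ins m v \<rho> x = x" if "x \<notin> {..<Suc m}" for x using that by (auto simp: ins_def)
qed

lemma ins_surj:
  assumes s: "\<sigma> permutes {..<Suc m}"
  shows "\<exists>v \<rho>. v \<le> m \<and> \<rho> permutes {..<m} \<and> \<sigma> = ins m v \<rho>"
proof -
  define v where "v = \<sigma> m"
  define \<rho> where "\<rho> = (\<lambda>i. if i < m then (if \<sigma> i < v then \<sigma> i else \<sigma> i - 1) else i)"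
  have lt: "\<sigma> i < Suc m" if "i < Suc m" for i using permutes_in_image[OF s, of i] that by simp
  have injs: "inj \<sigma>" using s by (rule permutes_inj)
  have ne: "\<sigma> i \<noteq> v" if "i < m" for i using injs that unfolding v_def by (auto dest: injD)
  have vm: "v \<le> m" using lt[of m] by (simp add: v_def)
  have sub: "\<rho> ` {..<m} \<subseteq> {..<m}"
  proof
    fix y assume "y \<in> \<rho> ` {..<m}"
    then obtain i where i: "i < m" "y = \<rho> i" by auto
    have "\<sigma> i < Suc m" using lt[of i] i by simp
    then show "y \<in> {..<m}" using i ne[of i] vm by (auto simp: \<rho>_def)
  qed
  have inj: "inj_on \<rho> {..<m}"
  proof (rule inj_onI)
    fix x y assume x: "x \<in> {..<m}" and y: "y \<in> {..<m}" and e: "\<rho> x = \<rho> y"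
    have "\<sigma> x = \<sigma> y" using e x y ne[of x] ne[of y] by (auto simp: \<rho>_def split: if_splits)
    then show "x = y" using injs by (auto dest: injD)
  qed
  have rp: "\<rho> permutes {..<m}"
  proof (rule bij_imp_permutes)
    show "bij_betw \<rho> {..<m} {..<m}"
      unfolding bij_betw_def using inj endo_inj_surj[OF _ sub inj] by auto
    show "\<rho> x = x" if "x \<notin> {..<m}" for x using that by (auto simp: \<rho>_def)
  qed
  have "\<sigma> = ins m v \<rho>"
  proof
    fix i show "\<sigma> i = ins m v \<rho> i"
    proof (cases "i < m")
      case True then show ?thesis using ne[of i] by (auto simp: ins_def \<rho>_def)
    next
      case False
      show ?thesis
      proof (cases "i = m")
        case True then show ?thesis by (simp add: ins_def v_def)
      next
        case False
        with \<open>\<not> i < m\<close> have "i \<notin> {..<Suc m}" by auto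
        then show ?thesis using s False \<open>\<not> i < m\<close> by (simp add: ins_def permutes_not_in)
      qed
    qed
  qed
  then show ?thesis using vm rp by blast
qed

lemma ins_inj:
  "inj_on (\<lambda>p. ins m (fst p) (snd p)) ({..m} \<times> orders m)"
proof (rule inj_onI)
  fix p q assume p: "p \<in> {..m} \<times> orders m" and q: "q \<in> {..m} \<times> orders m"
    and e: "ins m (fst p) (snd p) = ins m (fst q) (snd q)"
  obtain v \<rho> where pv: "p = (v, \<rho>)" by (cases p)
  obtain w \<tau> where qv: "q = (w, \<tau>)" by (cases q)
  have e': "ins m v \<rho> = ins m w \<tau>" using e pv qv by simp
  have vw: "v = w" using fun_cong[OF e', of m] by (simp add: ins_def)
  have "\<rho> i = \<tau> i" for i
  proof (cases "i < m")
    case True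
    have "ins m v \<rho> i = ins m w \<tau> i" using e' by simp
    with True vw show ?thesis by (auto simp: ins_def split: if_splits)
  next
    case False
    then have "i \<notin> {..<m}" by auto
    then show ?thesis using p q pv qv by (metis SigmaD2 mem_Collect_eq orders_def permutes_not_in snd_conv)
  qed
  then show "p = q" using pv qv vw by auto
qed

lemma ins_bij:
  "bij_betw (\<lambda>p. ins m (fst p) (snd p)) ({..m} \<times> orders m) (orders (Suc m))"
  unfolding bij_betw_def
proof
  show "inj_on (\<lambda>p. ins m (fst p) (snd p)) ({..m} \<times> orders m)" by (rule ins_inj)
  show "(\<lambda>p. ins m (fst p) (snd p)) ` ({..m} \<times> orders m) = orders (Suc m)"
  proof
    show "(\<lambda>p. ins m (fst p) (snd p)) ` ({..m} \<times> orders m) \<subseteq> orders (Suc m)"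
      by (auto simp: orders_def intro!: ins_perm)
    show "orders (Suc m) \<subseteq> (\<lambda>p. ins m (fst p) (snd p)) ` ({..m} \<times> orders m)"
    proof
      fix \<sigma> assume "\<sigma> \<in> orders (Suc m)"
      then obtain v \<rho> where "v \<le> m" "\<rho> permutes {..<m}" "\<sigma> = ins m v \<rho>"
        using ins_surj[of \<sigma> m] by (auto simp: orders_def)
      then show "\<sigma> \<in> (\<lambda>p. ins m (fst p) (snd p)) ` ({..m} \<times> orders m)"
        by (auto simp: orders_def image_iff intro!: bexI[of _ "(v,\<rho>)"])
    qed
  qed
qed

lemma card_bij_filter:
  assumes "bij_betw f A B"
  shows "card {y\<in>B. P y} = card {x\<in>A. P (f x)}"
proof -
  have "bij_betw f {x\<in>A. P (f x)} {y\<in>B. P y}"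
    using assms unfolding bij_betw_def by (auto simp: inj_on_def image_iff)
  then show ?thesis by (simp add: bij_betw_same_card)
qed

lemma card_orders_Suc:
  "card {\<sigma>\<in>orders (Suc m). P \<sigma>} = card {p \<in> {..m} \<times> orders m. P (ins m (fst p) (snd p))}"
  using card_bij_filter[OF ins_bij] .

lemma card_orders_prod:
  assumes "\<And>v \<rho>. v \<le> m \<Longrightarrow> \<rho> \<in> orders m \<Longrightarrow> P (ins m v \<rho>) = (A v \<and> B \<rho>)"
  shows "card {\<sigma>\<in>orders (Suc m). P \<sigma>} = card {v\<in>{..m}. A v} * card {\<rho>\<in>orders m. B \<rho>}"
proof -
  have "{p \<in> {..m} \<times> orders m. P (ins m (fst p) (snd p))} = {v\<in>{..m}. A v} \<times> {\<rho>\<in>orders m. B \<rho>}"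
    using assms by auto
  then show ?thesis by (simp add: card_orders_Suc card_cartesian_product)
qed




definition recd :: "nat \<Rightarrow> (nat \<Rightarrow> nat) \<Rightarrow> bool" where
  "recd j \<sigma> = (\<forall>i<j. \<sigma> i < \<sigma> j)"

lemma info_0: "info \<sigma> 0 = (\<lambda>a b. False)"
  by (auto simp: info_def fun_eq_iff)

lemma info_ins: "j < m \<or> j = 0 \<Longrightarrow> info (ins m v \<rho>) j = info \<rho> j"
  by (auto simp: info_def ins_def fun_eq_iff)

lemma mono_step: "((if x<v then x else Suc x) < (if y<v then y else Suc (y::nat))) = (x < y)"
  by auto

lemma info_ins_pred: "info (ins m v \<rho>) (m - Suc 0) = info \<rho> (m - Suc 0)"
  by (rule info_ins) auto

lemma info_ins_lt_pred: "j < m \<Longrightarrow> info (ins m v \<rho>) (j - Suc 0) = info \<rho> (j - Suc 0)"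
  by (rule info_ins) auto

lemma recd_ins_lt: "j < m \<Longrightarrow> recd j (ins m v \<rho>) = recd j \<rho>"
  unfolding recd_def ins_def using mono_step by auto

lemma recd_ins_m:
  assumes "v \<le> m" "\<rho> permutes {..<m}"
  shows "recd m (ins m v \<rho>) = (v = m)"
proof
  assume r: "recd m (ins m v \<rho>)"
  show "v = m"
  proof (rule ccontr)
    assume "v \<noteq> m"
    with assms have "v \<in> {..<m}" by auto
    then obtain i where i: "i \<in> {..<m}" "\<rho> i = v"
      using permutes_image[OF assms(2)] by (metis imageE)
    then have "ins m v \<rho> i = Suc v" by (simp add: ins_def)
    moreover have "ins m v \<rho> m = v" by (simp add: ins_def)
    ultimately show False using r i unfolding recd_def by (metis lessThan_iff lessI not_less_iff_gr_or_eq)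
  qed
next
  assume "v = m"
  then show "recd m (ins m v \<rho>)"
    using permutes_in_image[OF assms(2)] by (auto simp: recd_def ins_def)
qed

lemma ins_eq_m: "j < m \<Longrightarrow> \<rho> j < m \<Longrightarrow> (ins m v \<rho> j = m) = (\<rho> j = m - 1 \<and> v < m)"
  by (auto simp: ins_def)

lemma last_iff_recd:
  assumes "\<sigma> \<in> orders (Suc m)"
  shows "(\<sigma> m = m) = recd m \<sigma>"
proof -
  obtain v \<rho> where "v \<le> m" "\<rho> permutes {..<m}" "\<sigma> = ins m v \<rho>"
    using ins_surj[of \<sigma> m] assms by (auto simp: orders_def)
  then show ?thesis using recd_ins_m by (simp add: ins_def)
qed

lemma card_le_m: "card {v\<in>{..m::nat}. v = m} = 1"
proof -
  have "{v\<in>{..m::nat}. v = m} = {m}" by auto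
  then show ?thesis by simp
qed

lemma card_lt_m: "card {v\<in>{..m::nat}. v < m} = m"
proof -
  have "{v\<in>{..m::nat}. v < m} = {..<m}" by auto
  then show ?thesis by simp
qed

lemma card_le_m': "card {v. v = m \<and> v \<le> (m::nat)} = 1"
  using card_le_m by (simp add: conj_commute)

lemma card_lt_m': "card {v. v \<le> (m::nat) \<and> v < m} = m"
  using card_lt_m by simp

lemma count_a:
  "j < n \<Longrightarrow> (j+1) * card {\<sigma>\<in>orders n. P (info \<sigma> (j-1)) \<and> recd j \<sigma>} = card {\<sigma>\<in>orders n. P (info \<sigma> (j-1))}"
proof (induction n arbitrary: j)
  case 0 then show ?case by simp
next
  case (Suc m)
  show ?case
  proof (cases "j = m")
    case True
    have c1: "card {\<sigma>\<in>orders (Suc m). P (info \<sigma> (j-1)) \<and> recd j \<sigma>}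
        = card {v\<in>{..m}. v = m} * card {\<rho>\<in>orders m. P (info \<rho> (j-1))}"
      by (rule card_orders_prod) (auto simp: True info_ins_pred recd_ins_m orders_def)
    have c2: "card {\<sigma>\<in>orders (Suc m). P (info \<sigma> (j-1))}
        = card {v\<in>{..m}. True} * card {\<rho>\<in>orders m. P (info \<rho> (j-1))}"
      by (rule card_orders_prod) (auto simp: True info_ins_pred)
    show ?thesis using c1 c2 True by (simp add: card_le_m')
  next
    case False
    with Suc.prems have jm: "j < m" by auto
    have c1: "card {\<sigma>\<in>orders (Suc m). P (info \<sigma> (j-1)) \<and> recd j \<sigma>}
        = card {v\<in>{..m}. True} * card {\<rho>\<in>orders m. P (info \<rho> (j-1)) \<and> recd j \<rho>}"
      by (rule card_orders_prod) (use jm in \<open>simp add: info_ins_lt_pred recd_ins_lt\<close>)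
    have c2: "card {\<sigma>\<in>orders (Suc m). P (info \<sigma> (j-1))}
        = card {v\<in>{..m}. True} * card {\<rho>\<in>orders m. P (info \<rho> (j-1))}"
      by (rule card_orders_prod) (use jm in \<open>simp add: info_ins_lt_pred\<close>)
    show ?thesis unfolding c1 c2 Suc.IH[OF jm, symmetric] by (simp only: mult.left_commute)
  qed
qed

lemma count_b:
  "j < n \<Longrightarrow> n * card {\<sigma>\<in>orders n. P (info \<sigma> j) \<and> \<sigma> j = n - 1} = (j+1) * card {\<sigma>\<in>orders n. P (info \<sigma> j) \<and> recd j \<sigma>}"
proof (induction n arbitrary: j)
  case 0 then show ?case by simp
next
  case (Suc m)
  show ?case
  proof (cases "j = m")
    case True
    have "{\<sigma>\<in>orders (Suc m). P (info \<sigma> j) \<and> \<sigma> j = Suc m - 1} = {\<sigma>\<in>orders (Suc m). P (info \<sigma> j) \<and> recd j \<sigma>}"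
      using last_iff_recd True by auto
    then show ?thesis using True by simp
  next
    case False
    with Suc.prems have jm: "j < m" by auto
    have c1: "card {\<sigma>\<in>orders (Suc m). P (info \<sigma> j) \<and> recd j \<sigma>}
        = card {v\<in>{..m}. True} * card {\<rho>\<in>orders m. P (info \<rho> j) \<and> recd j \<rho>}"
      by (rule card_orders_prod) (use jm in \<open>simp add: info_ins recd_ins_lt\<close>)
    have c2: "card {\<sigma>\<in>orders (Suc m). P (info \<sigma> j) \<and> \<sigma> j = Suc m - 1}
        = card {v\<in>{..m}. v < m} * card {\<rho>\<in>orders m. P (info \<rho> j) \<and> \<rho> j = m - 1}"
    proof (rule card_orders_prod)
      fix v \<rho> assume "v \<le> m" "\<rho> \<in> orders m"
      then have "\<rho> j < m" using permutes_in_image[of \<rho> "{..<m}" j] jm by (auto simp: orders_def)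
      then show "(P (info (ins m v \<rho>) j) \<and> ins m v \<rho> j = Suc m - 1) = (v < m \<and> P (info \<rho> j) \<and> \<rho> j = m - 1)"
        using jm ins_eq_m[of j m \<rho> v] by (auto simp: info_ins)
    qed
    have "Suc m * (m * card {\<rho>\<in>orders m. P (info \<rho> j) \<and> \<rho> j = m - 1})
       = Suc m * ((j+1) * card {\<rho>\<in>orders m. P (info \<rho> j) \<and> recd j \<rho>})"
      using Suc.IH[OF jm] by simp
    then show ?thesis using c1 c2 by (simp add: card_lt_m' algebra_simps)
  qed
qed




definition S :: "nat \<Rightarrow> nat \<Rightarrow> real" where
  "S n j = (\<Sum>i\<in>{j..<n}. 1 / real i)"

definition hh :: "nat \<Rightarrow> nat \<Rightarrow> real" where
  "hh n m = (if m = 0 then 1 else real m * S n m)"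

definition MM :: "nat \<Rightarrow> nat \<Rightarrow> real" where
  "MM n j = Max (hh n ` {j..<n})"

lemma S_split: "j < n \<Longrightarrow> S n j = 1 / real j + S n (Suc j)"
  unfolding S_def by (simp add: sum.atLeast_Suc_lessThan)

lemma S_nonneg: "0 \<le> S n j"
  unfolding S_def by (intro sum_nonneg) auto

lemma S_anti: "j \<le> j' \<Longrightarrow> S n j' \<le> S n j"
  unfolding S_def by (intro sum_mono2) auto

lemma hh_nonneg: "0 \<le> hh n m"
  unfolding hh_def using S_nonneg by auto

lemma hh_rec: "Suc j < n \<Longrightarrow> real (Suc j) * hh n j = real (Suc j) + real j * hh n (Suc j)"
proof (cases "j = 0")
  case True then show ?thesis by (simp add: hh_def)
next
  case False
  assume "Suc j < n"
  then have "S n j = 1 / real j + S n (Suc j)" by (intro S_split) auto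
  with False show ?thesis by (simp add: hh_def field_simps)
qed

lemma hh_diff: "Suc j < n \<Longrightarrow> hh n (Suc j) - hh n j = S n (Suc j) - 1"
proof (cases "j = 0")
  case True then show ?thesis by (simp add: hh_def)
next
  case False
  assume "Suc j < n"
  then have "S n j = 1 / real j + S n (Suc j)" by (intro S_split) auto
  with False show ?thesis by (simp add: hh_def field_simps)
qed

lemma hh_last: "1 \<le> n \<Longrightarrow> hh n (n - 1) = 1"
proof (cases "n = 1")
  case True then show ?thesis by (simp add: hh_def)
next
  case False
  assume "1 \<le> n"
  with False have "{n-1..<n} = {n-1}" by auto
  then show ?thesis using False \<open>1 \<le> n\<close> by (simp add: hh_def S_def)
qed

lemma hh_dec:
  assumes "S n a \<le> 1" "a \<le> Suc j"
  shows "j \<le> j' \<Longrightarrow> j' < n \<Longrightarrow> hh n j' \<le> hh n j"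
proof (induction j' rule: dec_induct)
  case base then show ?case by simp
next
  case (step i)
  have "hh n (Suc i) - hh n i = S n (Suc i) - 1" using step by (intro hh_diff) auto
  moreover have "S n (Suc i) \<le> S n a" using assms step by (intro S_anti) auto
  ultimately show ?case using step assms by auto
qed

lemma hh_sdec:
  assumes "S n a < 1" "a \<le> Suc j" "j < j'" "j' < n"
  shows "hh n j' < hh n j"
proof -
  have "hh n (Suc j) - hh n j = S n (Suc j) - 1" using assms by (intro hh_diff) auto
  moreover have "S n (Suc j) \<le> S n a" using assms by (intro S_anti) auto
  ultimately have 1: "hh n (Suc j) < hh n j" using assms by auto
  have "hh n j' \<le> hh n (Suc j)" using assms by (intro hh_dec[where a=a]) auto
  with 1 show ?thesis by simp
qed




lemma MM_ge: "j \<le> i \<Longrightarrow> i < n \<Longrightarrow> hh n i \<le> MM n j"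
  unfolding MM_def by (intro Max_ge) auto

lemma MM_attained: "j < n \<Longrightarrow> \<exists>i. j \<le> i \<and> i < n \<and> MM n j = hh n i"
proof -
  assume "j < n"
  then have "Max (hh n ` {j..<n}) \<in> hh n ` {j..<n}" by (intro Max_in) auto
  then show ?thesis unfolding MM_def by auto
qed

lemma MM_nonneg: "j < n \<Longrightarrow> 0 \<le> MM n j"
  using MM_ge[of j j n] hh_nonneg[of n j] by simp

lemma MM_mono: "Suc j < n \<Longrightarrow> MM n (Suc j) \<le> MM n j"
  using MM_attained[of "Suc j" n] MM_ge[of j _ n] by force

lemma key_step:
  assumes "Suc j < n"
  shows "real (Suc j) + real j * MM n (Suc j) \<le> real (Suc j) * MM n j"
proof (cases "real (Suc j) \<le> MM n (Suc j)")
  case True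
  have "real (Suc j) + real j * MM n (Suc j) \<le> real (Suc j) * MM n (Suc j)"
    using True by (simp add: algebra_simps)
  also have "\<dots> \<le> real (Suc j) * MM n j" using MM_mono[OF assms] by (intro mult_left_mono) auto
  finally show ?thesis .
next
  case False
  have h1: "hh n (Suc j) \<le> MM n (Suc j)" using assms by (intro MM_ge) auto
  have "hh n (Suc j) = real (Suc j) * S n (Suc j)" by (simp add: hh_def)
  with h1 False have Sl: "S n (Suc j) < 1" by (smt (verit) mult_le_cancel_left1 of_nat_0_le_iff)
  obtain i where i: "Suc j \<le> i" "i < n" "MM n (Suc j) = hh n i" using MM_attained[of "Suc j" n] assms by auto
  have "hh n i \<le> hh n (Suc j)" using Sl i by (intro hh_dec[where a="Suc j"]) auto
  with i have "MM n (Suc j) \<le> hh n (Suc j)" by simp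
  then have "real (Suc j) + real j * MM n (Suc j) \<le> real (Suc j) + real j * hh n (Suc j)"
    by (intro add_left_mono mult_left_mono) auto
  also have "\<dots> = real (Suc j) * hh n j" using hh_rec[OF assms] by simp
  also have "\<dots> \<le> real (Suc j) * MM n j" using assms by (intro mult_left_mono MM_ge) auto
  finally show ?thesis .
qed

lemma lp_bound:
  fixes A C :: "nat \<Rightarrow> real"
  assumes C0: "\<And>j. j < n \<Longrightarrow> 0 \<le> C j"
    and CA: "\<And>j. j < n \<Longrightarrow> real (Suc j) * C j \<le> A j"
    and AA: "\<And>j. Suc j < n \<Longrightarrow> A (Suc j) + C j \<le> A j"
    and jn: "j < n"
  shows "(\<Sum>i\<in>{j..<n}. real (Suc i) * C i) \<le> A j * MM n j"
proof -
  have "j \<le> n - 1" using jn by simp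
  then show ?thesis
  proof (induction j rule: inc_induct)
    case base
    have "{n-1..<n} = {n-1}" using jn by auto
    moreover have "Suc (n-1) = n" using jn by simp
    ultimately have "(\<Sum>i\<in>{n-1..<n}. real (Suc i) * C i) = real n * C (n-1)" by simp
    also have "\<dots> \<le> A (n-1)" using CA[of "n-1"] jn \<open>Suc (n-1) = n\<close> by simp
    also have "\<dots> = A (n-1) * MM n (n-1)"
    proof -
      have "{n-1..<n} = {n-1}" using jn by auto
      then have "MM n (n-1) = hh n (n-1)" by (simp add: MM_def)
      then show ?thesis using hh_last[of n] jn by simp
    qed
    finally show ?case .
  next
    case (step j)
    have sj: "Suc j < n" using step jn by auto
    let ?M = "MM n (Suc j)"
    have M0: "0 \<le> ?M" using sj by (intro MM_nonneg)
    have cj: "0 \<le> C j" using C0 sj by auto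
    have Aj: "real (Suc j) * C j \<le> A j" using CA sj by auto
    have Aj0: "0 \<le> A j" using Aj cj by (smt (verit) of_nat_0_le_iff zero_le_mult_iff)
    have "(\<Sum>i\<in>{j..<n}. real (Suc i) * C i) = real (Suc j) * C j + (\<Sum>i\<in>{Suc j..<n}. real (Suc i) * C i)"
      using sj by (simp add: sum.atLeast_Suc_lessThan)
    also have "\<dots> \<le> real (Suc j) * C j + A (Suc j) * ?M" using step.IH by simp
    also have "\<dots> \<le> real (Suc j) * C j + (A j - C j) * ?M"
      using AA[OF sj] M0 by (intro add_left_mono mult_right_mono) auto
    also have "\<dots> = C j * (real (Suc j) - ?M) + A j * ?M" by (simp add: algebra_simps)
    also have "\<dots> \<le> A j * MM n j"
    proof (cases "?M \<le> real (Suc j)")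
      case True
      have "real (Suc j) * (C j * (real (Suc j) - ?M)) \<le> A j * (real (Suc j) - ?M)"
        using Aj True by (simp add: mult.assoc[symmetric] mult_right_mono)
      then have "real (Suc j) * (C j * (real (Suc j) - ?M) + A j * ?M) \<le> A j * (real (Suc j) + real j * ?M)"
        by (simp add: algebra_simps)
      also have "\<dots> \<le> A j * (real (Suc j) * MM n j)"
        using key_step[OF sj] Aj0 by (intro mult_left_mono) auto
      finally have "real (Suc j) * (C j * (real (Suc j) - ?M) + A j * ?M) \<le> real (Suc j) * (A j * MM n j)"
        by (simp add: algebra_simps)
      then show ?thesis by (simp add: mult_le_cancel_left_pos)
    next
      case False
      have "C j * (real (Suc j) - ?M) \<le> 0" using False cj by (simp add: mult_nonneg_nonpos)
      moreover have "A j * ?M \<le> A j * MM n j" using MM_mono[OF sj] Aj0 by (intro mult_left_mono)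
      ultimately show ?thesis by simp
    qed
    finally show ?case .
  qed
qed

lemma lp_exact:
  fixes A C :: "nat \<Rightarrow> real"
  assumes CA: "\<And>j. j < n \<Longrightarrow> k0 \<le> j \<Longrightarrow> real (Suc j) * C j = A j"
    and C0: "\<And>j. j < k0 \<Longrightarrow> C j = 0"
    and AA: "\<And>j. Suc j < n \<Longrightarrow> A (Suc j) + C j = A j"
    and kn: "k0 < n"
  shows "(\<Sum>i<n. real (Suc i) * C i) = A k0 * hh n k0"
proof -
  have main: "(\<Sum>i\<in>{j..<n}. real (Suc i) * C i) = A j * hh n j" if "k0 \<le> j" "j < n" for j
  proof -
    have "j \<le> n - 1" using that by simp
    then show ?thesis using that(1)
    proof (induction j rule: inc_induct)
      case base
      have "{n-1..<n} = {n-1}" using kn by auto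
      moreover have "Suc (n-1) = n" using kn by simp
      ultimately have "(\<Sum>i\<in>{n-1..<n}. real (Suc i) * C i) = real n * C (n-1)" by simp
      also have "\<dots> = A (n-1)" using CA[of "n-1"] kn base \<open>Suc (n-1) = n\<close> by simp
      finally show ?case using hh_last[of n] kn by simp
    next
      case (step j)
      have sj: "Suc j < n" using step by auto
      have "(\<Sum>i\<in>{j..<n}. real (Suc i) * C i) = real (Suc j) * C j + (\<Sum>i\<in>{Suc j..<n}. real (Suc i) * C i)"
        using sj by (simp add: sum.atLeast_Suc_lessThan)
      also have "\<dots> = A j + A (Suc j) * hh n (Suc j)" using step CA[of j] sj by simp
      also have "\<dots> = A j * hh n j"
      proof -
        have a1: "A (Suc j) = A j - C j" using AA[OF sj] by simp
        have a2: "real (Suc j) * C j = A j" using CA[of j] sj step by simp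
        have "real (Suc j) * A (Suc j) = real (Suc j) * A j - real (Suc j) * C j"
          by (simp add: a1 right_diff_distrib)
        also have "\<dots> = real j * A j" by (simp only: a2) (simp add: algebra_simps)
        finally have e1: "real (Suc j) * A (Suc j) = real j * A j" .
        have "real (Suc j) * (A j + A (Suc j) * hh n (Suc j)) = real (Suc j) * (A j * hh n j)"
          using hh_rec[OF sj] e1
          by (smt (verit, ccfv_threshold) mult.commute mult.left_commute distrib_left)
        then show ?thesis by simp
      qed
      finally show ?case .
    qed
  qed
  have "{..<n} = {..<k0} \<union> {k0..<n}" using kn by auto
  then have "(\<Sum>i<n. real (Suc i) * C i) = (\<Sum>i<k0. real (Suc i) * C i) + (\<Sum>i\<in>{k0..<n}. real (Suc i) * C i)"
    by (simp add: sum.union_disjoint ivl_disj_int_one(2))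
  also have "(\<Sum>i<k0. real (Suc i) * C i) = 0" using C0 by simp
  finally show ?thesis using main[of k0] kn by simp
qed




lemma odd_decomp: "0 < (n::nat) \<Longrightarrow> \<exists>k q. n = 2^k * q \<and> odd q"
proof (induction n rule: less_induct)
  case (less n)
  show ?case
  proof (cases "odd n")
    case True then show ?thesis by (intro exI[of _ 0] exI[of _ n]) auto
  next
    case False
    then obtain m where m: "n = 2 * m" by (auto elim: evenE)
    with less.prems have "0 < m" "m < n" by auto
    then obtain k q where "m = 2^k * q" "odd q" using less.IH by blast
    then show ?thesis using m by (intro exI[of _ "Suc k"] exI[of _ q]) auto
  qed
qed

lemma pow2_dvd_odd: "odd (q::nat) \<Longrightarrow> 2^k dvd 2^j * q \<Longrightarrow> k \<le> j"
proof (rule ccontr)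
  assume q: "odd q" and d: "2^k dvd 2^j * q" and "\<not> k \<le> j"
  then have "(2::nat)^(Suc j) dvd 2^k" by (intro le_imp_power_dvd) auto
  with d have "2^j * 2 dvd 2^j * q" by (metis dvd_trans power_Suc2)
  then have "2 dvd q" by (simp add: nat_mult_dvd_cancel_disj)
  with q show False by simp
qed

lemma odd_prod_nat: "finite A \<Longrightarrow> (\<forall>i\<in>A. odd (f i :: nat)) \<Longrightarrow> odd (prod f A)"
  by (induction A rule: finite_induct) auto

lemma S_ne_1:
  assumes a2: "2 \<le> a" and an: "a < n"
  shows "S n a \<noteq> 1"
proof (cases "n = Suc a")
  case True
  then have "S n a = 1 / real a" by (simp add: S_def)
  also have "\<dots> < 1" using a2 by simp
  finally show ?thesis by simp
next
  case False
  with an have a1n: "Suc a < n" by simp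
  define I where "I = {a..<n}"
  have finI: "finite I" by (simp add: I_def)
  have posI: "\<And>i. i \<in> I \<Longrightarrow> 0 < i" using a2 by (auto simp: I_def)
  have "\<forall>i. \<exists>kq. i \<in> I \<longrightarrow> i = 2^(fst kq) * snd kq \<and> odd (snd kq)"
    using odd_decomp posI by fastforce
  then obtain g where g: "\<And>i. i \<in> I \<Longrightarrow> i = 2^(fst (g i)) * snd (g i) \<and> odd (snd (g i))"
    by metis
  define kf where "kf i = fst (g i)" for i
  define qf where "qf i = snd (g i)" for i
  have dec: "\<And>i. i \<in> I \<Longrightarrow> i = 2^(kf i) * qf i" and oq: "\<And>i. i \<in> I \<Longrightarrow> odd (qf i)"
    using g by (auto simp: kf_def qf_def)
  define e where "e = Max (kf ` I)"
  have IneI: "I \<noteq> {}" using an by (auto simp: I_def)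
  have kfle: "\<And>i. i \<in> I \<Longrightarrow> kf i \<le> e" unfolding e_def using finI by auto
  have "Max (kf ` I) \<in> kf ` I" using finI IneI by (intro Max_in) auto
  then obtain i0 where i0I: "i0 \<in> I" and ke: "kf i0 = e"
    unfolding e_def by auto
  have kf_ge: "k \<le> kf i" if "i \<in> I" "2^k dvd i" for i k
    using pow2_dvd_odd[OF oq[OF that(1)], of k "kf i"] dec[OF that(1)] that(2) by simp
  have e1: "1 \<le> e"
  proof -
    have "a \<in> I" "Suc a \<in> I" using a1n by (auto simp: I_def)
    moreover have "even a \<or> even (Suc a)" by auto
    ultimately obtain i where "i \<in> I" "2^1 dvd i" by (metis power_one_right)
    then have "1 \<le> kf i" using kf_ge by blast
    then show ?thesis using kfle[OF \<open>i \<in> I\<close>] by simp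
  qed
  have uniq: "kf i < e" if iI: "i \<in> I" and ne: "i \<noteq> i0" for i
  proof (rule ccontr)
    assume "\<not> kf i < e"
    with kfle[OF iI] have ki: "kf i = e" by simp
    have "\<exists>z\<in>I. 2^(Suc e) dvd z" if xI: "x \<in> I" and yI: "y \<in> I" and xy: "x < y"
      and kx: "kf x = e" and ky: "kf y = e" for x y
    proof -
      have x: "x = 2^e * qf x" and y: "y = 2^e * qf y" using dec[OF xI] dec[OF yI] kx ky by auto
      have "qf x < qf y" using xy x y by (metis mult_less_cancel1)
      moreover have "odd (qf x)" using oq xI by auto
      ultimately have r2: "Suc (qf x) \<le> qf y" "even (Suc (qf x))" by auto
      then obtain r where r: "Suc (qf x) = 2 * r" "Suc (qf x) \<le> qf y" by (metis dvdE)
      define z where "z = 2^e * Suc (qf x)"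
      have "x \<le> z" using x by (simp add: z_def)
      moreover have "z \<le> y" unfolding z_def using y r(2) by (metis mult_le_mono2)
      ultimately have "x \<le> z" "z \<le> y" by auto
      then have "z \<in> I" using xI yI by (auto simp: I_def)
      moreover have "2^(Suc e) dvd z" using r by (simp add: z_def)
      ultimately show ?thesis by blast
    qed
    moreover have "i < i0 \<or> i0 < i" using ne by auto
    ultimately obtain z where "z \<in> I" "2^(Suc e) dvd z"
      using iI i0I ki ke by blast
    then have "Suc e \<le> kf z" using kf_ge by blast
    with kfle[OF \<open>z \<in> I\<close>] show False by simp
  qed
  define Op where "Op = prod qf I"
  define L where "L = 2^(e-1) * Op"
  define d where "d = prod qf (I - {i0})"
  have Od: "Op = qf i0 * d" unfolding Op_def d_def using finI i0I by (simp add: prod.remove)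
  have oddd: "odd d" unfolding d_def using oq finI by (intro odd_prod_nat) auto
  have twoL: "2 * L = i0 * d"
  proof -
    have "2 * L = 2^e * Op" using e1 by (simp add: L_def power_eq_if)
    also have "\<dots> = i0 * d" using dec[OF i0I] ke Od by (simp add: mult.assoc)
    finally show ?thesis .
  qed
  have dvdL: "i dvd L" if "i \<in> I - {i0}" for i
  proof -
    have iI: "i \<in> I" using that by auto
    have "(2::nat)^(kf i) dvd 2^(e-1)" using uniq[of i] that by (intro le_imp_power_dvd) auto
    moreover have "qf i dvd Op" unfolding Op_def using finI iI by auto
    ultimately have "2^(kf i) * qf i dvd L" unfolding L_def by (rule mult_dvd_mono)
    then show ?thesis using dec[OF iI] by simp
  qed
  show ?thesis
  proof
    assume S1: "S n a = 1"
    have "real L = real L * S n a" using S1 by simp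
    also have "\<dots> = (\<Sum>i\<in>I. real L / real i)" by (simp add: S_def I_def sum_distrib_left)
    also have "\<dots> = real L / real i0 + (\<Sum>i\<in>I - {i0}. real L / real i)"
      using finI i0I by (simp add: sum.remove)
    also have "(\<Sum>i\<in>I - {i0}. real L / real i) = (\<Sum>i\<in>I - {i0}. real (L div i))"
      using dvdL by (intro sum.cong) (auto simp: real_of_nat_div)
    also have "real L / real i0 = real d / 2"
    proof -
      have "0 < i0" using posI i0I by auto
      then show ?thesis using arg_cong[OF twoL, of real] by (simp add: field_simps)
    qed
    finally have "real L = real d / 2 + real (\<Sum>i\<in>I - {i0}. L div i)" by simp
    then have "real (2 * L) = real (d + 2 * (\<Sum>i\<in>I - {i0}. L div i))" by simp
    then have "2 * L = d + 2 * (\<Sum>i\<in>I - {i0}. L div i)" by (simp only: of_nat_eq_iff)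
    then have "even d" by (metis dvd_add_left_iff dvd_triv_left)
    with oddd show False by simp
  qed
qed




definition NS :: "rule \<Rightarrow> nat \<Rightarrow> (nat \<Rightarrow> nat) \<Rightarrow> bool" where
  "NS r j \<sigma> = (\<forall>i<j. \<not> r i (info \<sigma> i))"

definition ST :: "nat \<Rightarrow> rule \<Rightarrow> nat \<Rightarrow> (nat \<Rightarrow> nat) \<Rightarrow> bool" where
  "ST n r j \<sigma> = (NS r j \<sigma> \<and> (r j (info \<sigma> j) \<or> j = n - 1))"

definition restr :: "nat \<Rightarrow> (nat \<Rightarrow> nat \<Rightarrow> bool) \<Rightarrow> (nat \<Rightarrow> nat \<Rightarrow> bool)" where
  "restr i I = (\<lambda>a b. a \<le> i \<and> b \<le> i \<and> I a b)"

lemma restr_info: "i \<le> j \<Longrightarrow> restr i (info \<sigma> j) = info \<sigma> i"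
  by (auto simp: restr_def info_def fun_eq_iff)

definition PNS :: "rule \<Rightarrow> nat \<Rightarrow> (nat \<Rightarrow> nat \<Rightarrow> bool) \<Rightarrow> bool" where
  "PNS r j I = (\<forall>i<j. \<not> r i (restr i I))"

definition PST :: "nat \<Rightarrow> rule \<Rightarrow> nat \<Rightarrow> (nat \<Rightarrow> nat \<Rightarrow> bool) \<Rightarrow> bool" where
  "PST n r j I = (PNS r j I \<and> (r j I \<or> j = n - 1))"

lemma NS_P1: "NS r j \<sigma> = PNS r j (info \<sigma> (j - 1))"
  unfolding NS_def PNS_def by (auto simp: restr_info)

lemma NS_P2: "NS r j \<sigma> = PNS r j (info \<sigma> j)"
  unfolding NS_def PNS_def by (auto simp: restr_info)

lemma ST_P: "ST n r j \<sigma> = PST n r j (info \<sigma> j)"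
  unfolding ST_def PST_def by (simp add: NS_P2)

lemma sp_eq:
  assumes "j < n" "ST n r j \<sigma>"
  shows "stop_pos n r \<sigma> = j"
proof (cases "r j (info \<sigma> j)")
  case True
  have ex: "\<exists>j<n. r j (info \<sigma> j)" using True assms by auto
  have "(LEAST j. j < n \<and> r j (info \<sigma> j)) = j"
  proof (rule Least_equality)
    show "j < n \<and> r j (info \<sigma> j)" using True assms by simp
    show "\<And>y. y < n \<and> r y (info \<sigma> y) \<Longrightarrow> j \<le> y"
      using assms(2) unfolding ST_def NS_def using not_less by blast
  qed
  then show ?thesis using ex by (simp add: stop_pos_def)
next
  case False
  with assms have jn: "j = n - 1" by (simp add: ST_def)
  have nex: "\<not> (\<exists>i<n. r i (info \<sigma> i))"
  proof
    assume "\<exists>i<n. r i (info \<sigma> i)"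
    then obtain i where i: "i < n" "r i (info \<sigma> i)" by auto
    show False
    proof (cases "i < j")
      case True then show False using assms(2) i unfolding ST_def NS_def by auto
    next
      case False then have "i = j" using i jn by auto
      then show False using i \<open>\<not> r j (info \<sigma> j)\<close> by simp
    qed
  qed
  have "stop_pos n r \<sigma> = n - 1" unfolding stop_pos_def using nex by (rule if_not_P)
  with jn show ?thesis by simp
qed

lemma ST_ex:
  assumes "0 < n"
  shows "\<exists>j<n. ST n r j \<sigma>"
proof -
  let ?Q = "\<lambda>j. j < n \<and> (r j (info \<sigma> j) \<or> j = n - 1)"
  have ex: "?Q (n - 1)" using assms by simp
  define j where "j = (LEAST j. ?Q j)"
  have Qj: "?Q j" unfolding j_def using LeastI[of ?Q, OF ex] .
  have "NS r j \<sigma>"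
    unfolding NS_def
  proof (intro allI impI)
    fix i assume "i < j"
    then have "\<not> ?Q i" unfolding j_def by (rule not_less_Least)
    moreover have "i < n" using \<open>i < j\<close> Qj by simp
    ultimately show "\<not> r i (info \<sigma> i)" by simp
  qed
  then show ?thesis using Qj unfolding ST_def by blast
qed

lemma finite_orders: "finite (orders n)"
  unfolding orders_def by (rule finite_permutations) simp

lemma card_orders: "card (orders n) = fact n"
  unfolding orders_def by (rule card_permutations) simp_all

lemma win_decomp:
  assumes "0 < n"
  shows "card {\<sigma>\<in>orders n. \<sigma> (stop_pos n r \<sigma>) = n - 1}
       = (\<Sum>j<n. card {\<sigma>\<in>orders n. ST n r j \<sigma> \<and> \<sigma> j = n - 1})"
proof -
  define F where "F j = {\<sigma>\<in>orders n. ST n r j \<sigma> \<and> \<sigma> j = n - 1}" for j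
  have "{\<sigma>\<in>orders n. \<sigma> (stop_pos n r \<sigma>) = n - 1} = (\<Union>j\<in>{..<n}. F j)"
  proof (intro set_eqI iffI)
    fix \<sigma> assume a: "\<sigma> \<in> {\<sigma>\<in>orders n. \<sigma> (stop_pos n r \<sigma>) = n - 1}"
    obtain j where j: "j < n" "ST n r j \<sigma>" using ST_ex[OF assms] by blast
    then have "stop_pos n r \<sigma> = j" by (rule sp_eq)
    with a j have "\<sigma> \<in> F j" by (simp add: F_def)
    with j show "\<sigma> \<in> (\<Union>j\<in>{..<n}. F j)" by blast
  next
    fix \<sigma> assume "\<sigma> \<in> (\<Union>j\<in>{..<n}. F j)"
    then obtain j where j: "j < n" "\<sigma> \<in> F j" by blast
    then have "stop_pos n r \<sigma> = j" using sp_eq[of j n r \<sigma>] by (simp add: F_def)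
    with j show "\<sigma> \<in> {\<sigma>\<in>orders n. \<sigma> (stop_pos n r \<sigma>) = n - 1}" by (simp add: F_def)
  qed
  moreover have "card (\<Union>j\<in>{..<n}. F j) = (\<Sum>j<n. card (F j))"
  proof (rule card_UN_disjoint)
    show "finite {..<n}" by simp
    show "\<forall>j\<in>{..<n}. finite (F j)" using finite_orders by (simp add: F_def)
    show "\<forall>i\<in>{..<n}. \<forall>j\<in>{..<n}. i \<noteq> j \<longrightarrow> F i \<inter> F j = {}"
    proof (intro ballI impI)
      fix i j assume i: "i \<in> {..<n}" and j: "j \<in> {..<n}" and ij: "i \<noteq> j"
      show "F i \<inter> F j = {}"
      proof (rule ccontr)
        assume "F i \<inter> F j \<noteq> {}"
        then obtain \<sigma> where "\<sigma> \<in> F i" "\<sigma> \<in> F j" by blast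
        then have "ST n r i \<sigma>" "ST n r j \<sigma>" by (auto simp: F_def)
        then have "stop_pos n r \<sigma> = i" "stop_pos n r \<sigma> = j"
          using i j sp_eq[of i n r \<sigma>] sp_eq[of j n r \<sigma>] by auto
        with ij show False by simp
      qed
    qed
  qed
  ultimately show ?thesis by (simp add: F_def)
qed




lemma ST_NS: "ST n r j \<sigma> \<Longrightarrow> NS r j \<sigma>" by (simp add: ST_def)

lemma CA_le:
  assumes "j < n"
  shows "real (Suc j) * real (card {\<sigma>\<in>orders n. ST n r j \<sigma> \<and> recd j \<sigma>}) \<le> real (card {\<sigma>\<in>orders n. NS r j \<sigma>})"
proof -
  have "card {\<sigma>\<in>orders n. ST n r j \<sigma> \<and> recd j \<sigma>} \<le> card {\<sigma>\<in>orders n. NS r j \<sigma> \<and> recd j \<sigma>}"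
    using finite_orders by (intro card_mono) (auto simp: ST_def)
  then have "Suc j * card {\<sigma>\<in>orders n. ST n r j \<sigma> \<and> recd j \<sigma>} \<le> Suc j * card {\<sigma>\<in>orders n. NS r j \<sigma> \<and> recd j \<sigma>}"
    by (rule mult_le_mono2)
  also have "\<dots> = card {\<sigma>\<in>orders n. NS r j \<sigma>}"
    using count_a[OF assms, of "PNS r j"] by (simp add: NS_P1)
  finally have "real (Suc j * card {\<sigma>\<in>orders n. ST n r j \<sigma> \<and> recd j \<sigma>}) \<le> real (card {\<sigma>\<in>orders n. NS r j \<sigma>})"
    by (simp only: of_nat_le_iff)
  then show ?thesis by (simp only: of_nat_mult)
qed

lemma CA_eq:
  assumes "j < n" "\<And>\<sigma>. \<sigma> \<in> orders n \<Longrightarrow> (ST n r j \<sigma> \<and> recd j \<sigma>) = (NS r j \<sigma> \<and> recd j \<sigma>)"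
  shows "real (Suc j) * real (card {\<sigma>\<in>orders n. ST n r j \<sigma> \<and> recd j \<sigma>}) = real (card {\<sigma>\<in>orders n. NS r j \<sigma>})"
proof -
  have "{\<sigma>\<in>orders n. ST n r j \<sigma> \<and> recd j \<sigma>} = {\<sigma>\<in>orders n. NS r j \<sigma> \<and> recd j \<sigma>}"
    using assms(2) by auto
  then have "Suc j * card {\<sigma>\<in>orders n. ST n r j \<sigma> \<and> recd j \<sigma>} = card {\<sigma>\<in>orders n. NS r j \<sigma>}"
    using count_a[OF assms(1), of "PNS r j"] by (simp add: NS_P1)
  then have "real (Suc j * card {\<sigma>\<in>orders n. ST n r j \<sigma> \<and> recd j \<sigma>}) = real (card {\<sigma>\<in>orders n. NS r j \<sigma>})"
    by (simp only:)
  then show ?thesis by (simp only: of_nat_mult)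
qed

lemma NS_Suc: "NS r (Suc j) \<sigma> = (NS r j \<sigma> \<and> \<not> r j (info \<sigma> j))"
  unfolding NS_def using less_Suc_eq by auto

lemma AA_gen:
  assumes "Suc j < n"
  shows "card {\<sigma>\<in>orders n. NS r (Suc j) \<sigma>} + card {\<sigma>\<in>orders n. ST n r j \<sigma> \<and> recd j \<sigma>}
       = card {\<sigma>\<in>orders n. NS r j \<sigma> \<and> \<not> r j (info \<sigma> j)} + card {\<sigma>\<in>orders n. NS r j \<sigma> \<and> r j (info \<sigma> j) \<and> recd j \<sigma>}"
proof -
  have "{\<sigma>\<in>orders n. ST n r j \<sigma> \<and> recd j \<sigma>} = {\<sigma>\<in>orders n. NS r j \<sigma> \<and> r j (info \<sigma> j) \<and> recd j \<sigma>}"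
    using assms by (auto simp: ST_def)
  then show ?thesis by (simp add: NS_Suc)
qed

lemma AA_le:
  assumes "Suc j < n"
  shows "real (card {\<sigma>\<in>orders n. NS r (Suc j) \<sigma>}) + real (card {\<sigma>\<in>orders n. ST n r j \<sigma> \<and> recd j \<sigma>})
       \<le> real (card {\<sigma>\<in>orders n. NS r j \<sigma>})"
proof -
  have "card {\<sigma>\<in>orders n. NS r j \<sigma> \<and> \<not> r j (info \<sigma> j)} + card {\<sigma>\<in>orders n. NS r j \<sigma> \<and> r j (info \<sigma> j) \<and> recd j \<sigma>}
     = card ({\<sigma>\<in>orders n. NS r j \<sigma> \<and> \<not> r j (info \<sigma> j)} \<union> {\<sigma>\<in>orders n. NS r j \<sigma> \<and> r j (info \<sigma> j) \<and> recd j \<sigma>})"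
    using finite_orders by (intro card_Un_disjoint[symmetric]) auto
  also have "\<dots> \<le> card {\<sigma>\<in>orders n. NS r j \<sigma>}"
    using finite_orders by (intro card_mono) auto
  finally have "card {\<sigma>\<in>orders n. NS r (Suc j) \<sigma>} + card {\<sigma>\<in>orders n. ST n r j \<sigma> \<and> recd j \<sigma>} \<le> card {\<sigma>\<in>orders n. NS r j \<sigma>}"
    using AA_gen[OF assms, of r] by simp
  then have "real (card {\<sigma>\<in>orders n. NS r (Suc j) \<sigma>} + card {\<sigma>\<in>orders n. ST n r j \<sigma> \<and> recd j \<sigma>}) \<le> real (card {\<sigma>\<in>orders n. NS r j \<sigma>})"
    by (simp only: of_nat_le_iff)
  then show ?thesis by (simp only: of_nat_add)
qed

lemma B_eq:
  assumes "j < n"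
  shows "real n * real (card {\<sigma>\<in>orders n. ST n r j \<sigma> \<and> \<sigma> j = n - 1}) = real (Suc j) * real (card {\<sigma>\<in>orders n. ST n r j \<sigma> \<and> recd j \<sigma>})"
proof -
  have "n * card {\<sigma>\<in>orders n. ST n r j \<sigma> \<and> \<sigma> j = n - 1} = Suc j * card {\<sigma>\<in>orders n. ST n r j \<sigma> \<and> recd j \<sigma>}"
    using count_b[OF assms, of "PST n r j"] by (simp only: ST_P Suc_eq_plus1)
  then have "real (n * card {\<sigma>\<in>orders n. ST n r j \<sigma> \<and> \<sigma> j = n - 1}) = real (Suc j * card {\<sigma>\<in>orders n. ST n r j \<sigma> \<and> recd j \<sigma>})"
    by (simp only:)
  then show ?thesis by (simp only: of_nat_mult)
qed

lemma win_prob_sum: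
  assumes "0 < n"
  shows "win_prob n r = (\<Sum>j<n. real (Suc j) * real (card {\<sigma>\<in>orders n. ST n r j \<sigma> \<and> recd j \<sigma>})) / (real n * fact n)"
proof -
  have "win_prob n r = (\<Sum>j<n. real (card {\<sigma>\<in>orders n. ST n r j \<sigma> \<and> \<sigma> j = n - 1})) / fact n"
    unfolding win_prob_def using win_decomp[OF assms, of r] by (simp add: card_orders)
  also have "(\<Sum>j<n. real (card {\<sigma>\<in>orders n. ST n r j \<sigma> \<and> \<sigma> j = n - 1}))
      = (\<Sum>j<n. real (Suc j) * real (card {\<sigma>\<in>orders n. ST n r j \<sigma> \<and> recd j \<sigma>})) / real n"
    unfolding sum_divide_distrib
  proof (rule sum.cong)
    fix j assume "j \<in> {..<n}"
    then show "real (card {\<sigma>\<in>orders n. ST n r j \<sigma> \<and> \<sigma> j = n - 1}) = real (Suc j) * real (card {\<sigma>\<in>orders n. ST n r j \<sigma> \<and> recd j \<sigma>}) / real n"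
      using B_eq[of j n r] assms by (simp add: field_simps)
  qed simp
  finally show ?thesis by simp
qed

lemma A0: "card {\<sigma>\<in>orders n. NS r 0 \<sigma>} = fact n"
  by (simp add: NS_def card_orders)

lemma win_bound:
  assumes "0 < n"
  shows "win_prob n r \<le> MM n 0 / real n"
proof -
  define A where "A j = real (card {\<sigma>\<in>orders n. NS r j \<sigma>})" for j
  define C where "C j = real (card {\<sigma>\<in>orders n. ST n r j \<sigma> \<and> recd j \<sigma>})" for j
  have "(\<Sum>i\<in>{0..<n}. real (Suc i) * C i) \<le> A 0 * MM n 0"
  proof (rule lp_bound)
    show "0 < n" using assms .
    show "0 \<le> C j" for j by (simp add: C_def)
    show "real (Suc j) * C j \<le> A j" if "j < n" for j unfolding A_def C_def using that by (rule CA_le)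
    show "A (Suc j) + C j \<le> A j" if "Suc j < n" for j unfolding A_def C_def using that by (rule AA_le)
  qed
  then have "(\<Sum>i<n. real (Suc i) * C i) \<le> fact n * MM n 0"
    by (simp add: A_def A0 atLeast0LessThan)
  then have "(\<Sum>i<n. real (Suc i) * C i) / (real n * fact n) \<le> fact n * MM n 0 / (real n * fact n)"
    using assms by (intro divide_right_mono) auto
  also have "\<dots> = MM n 0 / real n" by simp
  finally show ?thesis using win_prob_sum[OF assms, of r] by (simp add: C_def)
qed

lemma thr_info: "thr k j (info \<sigma> j) = (k \<le> Suc j \<and> recd j \<sigma>)"
  by (auto simp: thr_def info_def recd_def)

lemma win_thr:
  assumes "1 \<le> k" "k \<le> n"
  shows "win_prob n (thr k) = hh n (k - 1) / real n"
proof -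
  have n0: "0 < n" using assms by simp
  define r where "r = thr k"
  define A where "A j = real (card {\<sigma>\<in>orders n. NS r j \<sigma>})" for j
  define C where "C j = real (card {\<sigma>\<in>orders n. ST n r j \<sigma> \<and> recd j \<sigma>})" for j
  have "(\<Sum>i<n. real (Suc i) * C i) = A (k-1) * hh n (k-1)"
  proof (rule lp_exact)
    show "k - 1 < n" using assms by simp
    show "real (Suc j) * C j = A j" if "j < n" "k - 1 \<le> j" for j
      unfolding A_def C_def
    proof (rule CA_eq)
      show "j < n" using that by simp
      fix \<sigma> :: "nat \<Rightarrow> nat"
      have "k \<le> Suc j" using that by simp
      then show "(ST n r j \<sigma> \<and> recd j \<sigma>) = (NS r j \<sigma> \<and> recd j \<sigma>)"
        by (auto simp: ST_def r_def thr_info)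
    qed
    show "C j = 0" if "j < k - 1" for j
    proof -
      have "{\<sigma>\<in>orders n. ST n r j \<sigma> \<and> recd j \<sigma>} = {}"
        using that assms by (auto simp: ST_def r_def thr_info)
      then show ?thesis unfolding C_def by (simp only: card.empty of_nat_0)
    qed
    show "A (Suc j) + C j = A j" if "Suc j < n" for j
    proof -
      have "{\<sigma>\<in>orders n. NS r j \<sigma> \<and> r j (info \<sigma> j) \<and> recd j \<sigma>} = {\<sigma>\<in>orders n. NS r j \<sigma> \<and> r j (info \<sigma> j)}"
        by (auto simp: r_def thr_info)
      then have e: "card {\<sigma>\<in>orders n. NS r (Suc j) \<sigma>} + card {\<sigma>\<in>orders n. ST n r j \<sigma> \<and> recd j \<sigma>}
         = card {\<sigma>\<in>orders n. NS r j \<sigma> \<and> \<not> r j (info \<sigma> j)} + card {\<sigma>\<in>orders n. NS r j \<sigma> \<and> r j (info \<sigma> j)}"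
        using AA_gen[OF that, of r] by simp
      also have "\<dots> = card ({\<sigma>\<in>orders n. NS r j \<sigma> \<and> \<not> r j (info \<sigma> j)} \<union> {\<sigma>\<in>orders n. NS r j \<sigma> \<and> r j (info \<sigma> j)})"
        using finite_orders by (intro card_Un_disjoint[symmetric]) auto
      also have "({\<sigma>\<in>orders n. NS r j \<sigma> \<and> \<not> r j (info \<sigma> j)} \<union> {\<sigma>\<in>orders n. NS r j \<sigma> \<and> r j (info \<sigma> j)}) = {\<sigma>\<in>orders n. NS r j \<sigma>}"
        by auto
      finally have "real (card {\<sigma>\<in>orders n. NS r (Suc j) \<sigma>} + card {\<sigma>\<in>orders n. ST n r j \<sigma> \<and> recd j \<sigma>}) = real (card {\<sigma>\<in>orders n. NS r j \<sigma>})"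
        by (simp only:)
      then show ?thesis unfolding A_def C_def by (simp only: of_nat_add)
    qed
  qed
  moreover have "A (k-1) = fact n"
  proof -
    have "{\<sigma>\<in>orders n. NS r (k-1) \<sigma>} = orders n"
      by (auto simp: NS_def r_def thr_info)
    then show ?thesis by (simp add: A_def card_orders)
  qed
  ultimately have "(\<Sum>i<n. real (Suc i) * C i) = fact n * hh n (k-1)" by simp
  then show ?thesis using win_prob_sum[OF n0, of r] by (simp add: C_def r_def)
qed



lemma ar1: fixes m T n :: real assumes "0 < m" "1 < T" "0 < n" shows "m*(T+1/n)/(n+1) < m*T/n"
proof -
  have "n*T+1 < T*(n+1)" using assms by (simp add: algebra_simps)
  then have "m*(n*T+1) < m*(T*(n+1))" using assms by (intro mult_strict_left_mono)
  then have "m*(n*T+1)/(n*(n+1)) < m*(T*(n+1))/(n*(n+1))" using assms by (intro divide_strict_right_mono) auto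
  moreover have "m*(T+1/n)/(n+1) = m*(n*T+1)/(n*(n+1))" using assms by (simp add: field_simps)
  moreover have "m*T/n = m*(T*(n+1))/(n*(n+1))"
  proof -
    have "n+1 \<noteq> 0" using assms by simp
    then have "(m*T)*(n+1)/(n*(n+1)) = (m*T)/n" by (rule mult_divide_mult_cancel_right)
    then show ?thesis by (simp add: mult.assoc)
  qed
  ultimately show ?thesis by simp
qed
lemma ar2: fixes m T n :: real assumes "T < 1" "m \<le> n" "1 \<le> m" "0 < n" shows "m*(T+1/n)/(n+1) < (1+(m-1)*T)/n"
proof -
  have "0 < (n+1-m)*(1-T)" using assms by (intro mult_pos_pos) auto
  then have "m*(n*T+1) < (n+1)*(1+(m-1)*T)" by (simp add: algebra_simps)
  then have "m*(n*T+1)/(n*(n+1)) < (n+1)*(1+(m-1)*T)/(n*(n+1))" using assms by (intro divide_strict_right_mono) auto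
  moreover have "m*(T+1/n)/(n+1) = m*(n*T+1)/(n*(n+1))" using assms by (simp add: field_simps)
  moreover have "(1+(m-1)*T)/n = (n+1)*(1+(m-1)*T)/(n*(n+1))"
  proof -
    have "n+1 \<noteq> 0" using assms by simp
    then have "(1+(m-1)*T)*(n+1)/(n*(n+1)) = (1+(m-1)*T)/n" by (rule mult_divide_mult_cancel_right)
    then show ?thesis by (simp add: mult.commute)
  qed
  ultimately show ?thesis by simp
qed



lemma V_eq:
  assumes n0: "0 < n"
  shows "V n = MM n 0 / real n"
proof (rule antisym)
  show "V n \<le> MM n 0 / real n"
    unfolding V_def by (rule cSUP_least) (use win_bound[OF n0] in auto)
  obtain i where i: "0 \<le> i" "i < n" "MM n 0 = hh n i" using MM_attained[OF n0] by blast
  have bdd: "bdd_above (range (win_prob n))"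
    using win_bound[OF n0] by (intro bdd_aboveI) auto
  have e: "win_prob n (thr (Suc i)) = hh n i / real n" using win_thr[of "Suc i" n] i by simp
  have le: "win_prob n (thr (Suc i)) \<le> V n"
    unfolding V_def by (rule cSUP_upper) (use bdd in auto)
  show "MM n 0 / real n \<le> V n" using e le i by simp
qed

lemma S1_ge: "3 \<le> n \<Longrightarrow> 3/2 \<le> S n 1"
proof -
  assume n: "3 \<le> n"
  have "S n 1 = 1 / real 1 + S n 2" using n S_split[of 1 n] by (simp add: numeral_2_eq_2)
  also have "S n 2 = 1 / real 2 + S n 3" using n S_split[of 2 n] by (simp add: numeral_3_eq_3)
  finally show ?thesis using S_nonneg[of n 3] by simp
qed

lemma S_Suc_n: "m \<le> n \<Longrightarrow> S (Suc n) m = S n m + 1 / real n"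
  unfolding S_def by (simp add: sum.atLeastLessThan_Suc)

lemma decr_core:
  assumes n3: "3 \<le> n" and mn: "m \<le> n"
  shows "\<exists>i<n. hh (Suc n) m / real (Suc n) < hh n i / real n"
proof (cases "m = 0")
  case True
  then have "hh (Suc n) m / real (Suc n) < hh n 0 / real n" using n3 by (simp add: hh_def frac_less2)
  then show ?thesis using n3 by (intro exI[of _ 0]) auto
next
  case False
  define T where "T = S n m"
  have hS: "hh (Suc n) m = real m * (T + 1 / real n)" using False mn by (simp add: hh_def T_def S_Suc_n)
  have npos: "0 < real n" using n3 by simp
  consider "1 < T" | "T < 1" | "T = 1" by linarith
  then show ?thesis
  proof cases
    case 1
    have "m < n"
    proof (rule ccontr)
      assume "\<not> m < n" then have "m = n" using mn by simp
      then have "T = 0" by (simp add: T_def S_def)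
      with 1 show False by simp
    qed
    have "hh n m = real m * T" using False by (simp add: hh_def T_def)
    moreover have "real m * (T + 1 / real n) / (real n + 1) < real m * T / real n"
      using False 1 npos by (intro ar1) auto
    ultimately show ?thesis using hS \<open>m < n\<close> by (intro exI[of _ m]) (simp add: add.commute)
  next
    case 2
    have m2: "2 \<le> m"
    proof (rule ccontr)
      assume "\<not> 2 \<le> m" with False have "m = 1" by simp
      then have "3/2 \<le> T" using S1_ge[OF n3] by (simp add: T_def)
      with 2 show False by simp
    qed
    have "hh n (m - 1) = real (m - 1) * S n (m - 1)" using m2 by (simp add: hh_def)
    also have "S n (m - 1) = 1 / real (m - 1) + T" using m2 mn S_split[of "m-1" n] by (simp add: T_def)
    finally have hm0: "hh n (m - 1) = real (m - 1) * (1 / real (m - 1) + T)" .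
    have r1: "real (m - 1) = real m - 1" using m2 by (simp add: of_nat_diff)
    have r0: "real (m - 1) \<noteq> 0" using m2 by simp
    have "hh n (m - 1) = 1 + real (m - 1) * T" using hm0 r0 by (simp add: distrib_left)
    then have hm: "hh n (m - 1) = 1 + (real m - 1) * T" using r1 by simp
    have "real m * (T + 1 / real n) / (real n + 1) < (1 + (real m - 1) * T) / real n"
      using 2 mn m2 npos by (intro ar2) auto
    then show ?thesis using hS hm m2 mn by (intro exI[of _ "m - 1"]) (simp add: add.commute)
  next
    case 3
    have m2: "2 \<le> m"
    proof (rule ccontr)
      assume "\<not> 2 \<le> m" with False have "m = 1" by simp
      then have "3/2 \<le> T" using S1_ge[OF n3] by (simp add: T_def)
      with 3 show False by simp
    qed
    have "m < n"
    proof (rule ccontr)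
      assume "\<not> m < n" then have "m = n" using mn by simp
      then have "T = 0" by (simp add: T_def S_def)
      with 3 show False by simp
    qed
    with m2 have "S n m \<noteq> 1" by (intro S_ne_1) auto
    with 3 show ?thesis by (simp add: T_def)
  qed
qed

lemma part1:
  assumes n3: "3 \<le> n"
  shows "V (Suc n) < V n"
proof -
  obtain m where m: "0 \<le> m" "m < Suc n" "MM (Suc n) 0 = hh (Suc n) m" using MM_attained[of 0 "Suc n"] by auto
  obtain i where i: "i < n" "hh (Suc n) m / real (Suc n) < hh n i / real n"
    using decr_core[OF n3, of m] m by auto
  have "V (Suc n) = hh (Suc n) m / real (Suc n)" using V_eq[of "Suc n"] m by simp
  also have "\<dots> < hh n i / real n" by (rule i(2))
  also have "\<dots> \<le> MM n 0 / real n" using i(1) by (intro divide_right_mono MM_ge) auto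
  also have "\<dots> = V n" using V_eq[of n] n3 by simp
  finally show ?thesis .
qed

lemma part2:
  assumes n3: "3 \<le> n"
  shows "\<exists>!k. k \<in> {1..n} \<and> (\<forall>k'\<in>{1..n}. win_prob n (thr k') \<le> win_prob n (thr k))"
proof -
  have wt: "\<And>k. k \<in> {1..n} \<Longrightarrow> win_prob n (thr k) = hh n (k - 1) / real n"
    using win_thr by auto
  have npos: "0 < real n" using n3 by simp
  obtain i where i: "0 \<le> i" "i < n" "MM n 0 = hh n i" using MM_attained[of 0 n] n3 by auto
  have exist: "Suc i \<in> {1..n} \<and> (\<forall>k'\<in>{1..n}. win_prob n (thr k') \<le> win_prob n (thr (Suc i)))"
  proof (intro conjI ballI)
    show "Suc i \<in> {1..n}" using i by auto
    fix k' assume k': "k' \<in> {1..n}"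
    have "hh n (k' - 1) \<le> hh n i" using i k' MM_ge[of 0 "k'-1" n] by auto
    then show "win_prob n (thr k') \<le> win_prob n (thr (Suc i))"
      using wt[OF k'] wt[of "Suc i"] i npos by (simp add: divide_right_mono)
  qed
  have noeq: False if m1: "m1 < m2" "m2 < n" and mx: "\<And>j. j < n \<Longrightarrow> hh n j \<le> hh n m1"
    and eq: "hh n m2 = hh n m1" for m1 m2
  proof -
    have "hh n (Suc m1) \<le> hh n m1" using mx m1 by auto
    moreover have "hh n (Suc m1) - hh n m1 = S n (Suc m1) - 1" using m1 by (intro hh_diff) auto
    ultimately have Sle: "S n (Suc m1) \<le> 1" by simp
    have m1pos: "1 \<le> m1"
    proof (rule ccontr)
      assume "\<not> 1 \<le> m1" then have "m1 = 0" by simp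
      with Sle S1_ge[OF n3] show False by simp
    qed
    have "S n (Suc m1) \<noteq> 1" using m1 m1pos by (intro S_ne_1) auto
    with Sle have "S n (Suc m1) < 1" by simp
    then have "hh n m2 < hh n m1" using m1 by (intro hh_sdec[where a="Suc m1"]) auto
    with eq show False by simp
  qed
  show ?thesis
  proof (rule ex1I[of _ "Suc i"])
    show "Suc i \<in> {1..n} \<and> (\<forall>k'\<in>{1..n}. win_prob n (thr k') \<le> win_prob n (thr (Suc i)))" by (rule exist)
    fix k assume k: "k \<in> {1..n} \<and> (\<forall>k'\<in>{1..n}. win_prob n (thr k') \<le> win_prob n (thr k))"
    have mxk: "hh n j \<le> hh n (k - 1)" if "j < n" for j
    proof -
      have "win_prob n (thr (Suc j)) \<le> win_prob n (thr k)" using k that by auto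
      then have "hh n j / real n \<le> hh n (k - 1) / real n" using wt[of "Suc j"] wt[of k] k that by simp
      then show ?thesis using npos by (simp add: divide_le_cancel)
    qed
    have mxi: "hh n j \<le> hh n i" if "j < n" for j using MM_ge[of 0 j n] that i by auto
    have eqv: "hh n (k - 1) = hh n i" using mxk[of i] mxi[of "k-1"] i k by auto
    have "k - 1 = i"
    proof (rule ccontr)
      assume ne: "k - 1 \<noteq> i"
      show False
      proof (cases "k - 1 < i")
        case True
        show False by (rule noeq[of "k-1" i]) (use True i mxk eqv in auto)
      next
        case False
        with ne have "i < k - 1" by simp
        show False by (rule noeq[of i "k-1"]) (use \<open>i < k - 1\<close> k mxi eqv in auto)
      qed
    qed
    then show "k = Suc i" using k by auto
  qed
qed

theorem theorem5p1:
  shows "(\<forall>n\<ge>3. V (Suc n) < V n) \<and>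
         (\<forall>n\<ge>3. \<exists>!k. k \<in> {1..n} \<and> (\<forall>k'\<in>{1..n}. win_prob n (thr k') \<le> win_prob n (thr k)))"
  using part1 part2 by blast


end
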